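(* Let $q=|q|e^{i\varphi}$, where $|q|\in L^\infty(\mathbb{R})$ never vanishes and $\varphi:\mathbb{R}\to\mathbb{R}$ is locally absolutely continuous with $\partial_x\varphi\in L^\infty(\mathbb{R};\mathbb{R})$. Let $L=\begin{pmatrix} i\partial_x & -iq\\ i\bar q & -i\partial_x\end{pmatrix}:H^1(\mathbb{R};\mathbb{C}^2)\to L^2(\mathbb{R};\mathbb{C}^2)$. Then every eigenvalue $\lambda\in\mathbb{R}$ of $L$ satisfies, for all $c\in\mathbb{R}$, $$c-\lambda\le \Big\|\Big(\tfrac12\partial_x\varphi-|q|+c\Big)^{(+)}\Big\|_{L^\infty}\quad\text{or}\quad c+\lambda\le \Big\|\Big(\tfrac12\partial_x\varphi+|q|-c\Big)^{(-)}\Big\|_{L^\infty}.$$ In particular, if $|q|\ge c+\frac12|\partial_x\varphi|$ pointwise for some $c>0$, then $L$ has no eigenvalues in $(-c,c)$.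
   Context: For a real function $f$, $f^{(+)}=\max\{f,0\}$ and $f^{(-)}=\max\{-f,0\}$ denote its positive and negative parts. *)

theory Defs
  imports "HOL-Analysis.Analysis" "HOL-Probability.Essential_Supremum"
begin

definition abs_cont_on :: "real set \<Rightarrow> (real \<Rightarrow> 'b::real_normed_vector) \<Rightarrow> bool" where
  "abs_cont_on S f \<longleftrightarrow>
     (\<forall>\<epsilon>>0. \<exists>\<delta>>0. \<forall>(n::nat) (a::nat \<Rightarrow> real) b.
        (\<forall>k<n. a k \<le> b k \<and> {a k..b k} \<subseteq> S) \<and>
        (\<forall>j<n. \<forall>k<n. j \<noteq> k \<longrightarrow> {a j<..<b j} \<inter> {a k<..<b k} = {}) \<and>
        (\<Sum>k<n. b k - a k) < \<delta>
        \<longrightarrow> (\<Sum>k<n. norm (f (b k) - f (a k))) < \<epsilon>)"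

definition loc_abs_cont :: "(real \<Rightarrow> 'b::real_normed_vector) \<Rightarrow> bool" where
  "loc_abs_cont f \<longleftrightarrow> (\<forall>a b. abs_cont_on {a..b} f)"

definition ae_deriv :: "(real \<Rightarrow> 'b::real_normed_vector) \<Rightarrow> (real \<Rightarrow> 'b) \<Rightarrow> bool" where
  "ae_deriv f f' \<longleftrightarrow> (AE x in lborel. (f has_vector_derivative f' x) (at x))"

definition L2 :: "(real \<Rightarrow> complex) \<Rightarrow> bool" where
  "L2 f \<longleftrightarrow> f \<in> borel_measurable lborel \<and> integrable lborel (\<lambda>x. (cmod (f x))\<^sup>2)"

definition Linf :: "(real \<Rightarrow> real) \<Rightarrow> bool" where
  "Linf f \<longleftrightarrow> f \<in> borel_measurable lborel \<and> (\<exists>C. AE x in lborel. \<bar>f x\<bar> \<le> C)"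

definition Linf_norm :: "(real \<Rightarrow> real) \<Rightarrow> real" where
  "Linf_norm f = real_of_ereal (esssup lborel (\<lambda>x. ereal \<bar>f x\<bar>))"

definition pos_part :: "(real \<Rightarrow> real) \<Rightarrow> real \<Rightarrow> real" where
  "pos_part f x = max (f x) 0"

definition neg_part :: "(real \<Rightarrow> real) \<Rightarrow> real \<Rightarrow> real" where
  "neg_part f x = max (- f x) 0"

text \<open>u is in H^1(R;C): u is (a locally AC representative) in L^2 whose a.e. derivative u' is in L^2.\<close>
definition H1 :: "(real \<Rightarrow> complex) \<Rightarrow> (real \<Rightarrow> complex) \<Rightarrow> bool" where
  "H1 u u' \<longleftrightarrow> L2 u \<and> loc_abs_cont u \<and> ae_deriv u u' \<and> L2 u'"

definition is_eigenvalue :: "(real \<Rightarrow> complex) \<Rightarrow> complex \<Rightarrow> bool" where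
  "is_eigenvalue q lam \<longleftrightarrow>
     (\<exists>u1 u2 u1' u2'. H1 u1 u1' \<and> H1 u2 u2' \<and>
        \<not> (AE x in lborel. u1 x = 0 \<and> u2 x = 0) \<and>
        (AE x in lborel.
           \<i> * u1' x - \<i> * q x * u2 x = lam * u1 x \<and>
           \<i> * cnj (q x) * u1 x - \<i> * u2' x = lam * u2 x))"

end

theory Submission
  imports Defs
begin

lemma tag_interval:
  assumes "p tagged_division_of {a..b::real}" "(x,k) \<in> p"
  shows "\<exists>u v. k = {u..v} \<and> u \<le> x \<and> x \<le> v \<and> a \<le> u \<and> v \<le> b \<and> Inf k = u \<and> Sup k = v"
proof -
  obtain u v where k: "k = cbox u v" using tagged_division_ofD(4)[OF assms] by blast
  have "x \<in> k" "k \<subseteq> {a..b}" using tagged_division_ofD(2,3)[OF assms] by auto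
  then show ?thesis using k by (auto simp: cbox_interval)
qed

lemma deriv_approx:
  assumes "(Q has_real_derivative D) (at x)" "e > 0"
  shows "\<exists>d>0. \<forall>y. \<bar>y - x\<bar> < d \<longrightarrow> \<bar>Q y - Q x - D * (y - x)\<bar> \<le> e * \<bar>y - x\<bar>"
  using assms unfolding has_field_derivative_def has_derivative_at_alt
  by (auto simp: real_norm_def)

lemma measure_Icc_leb: "u \<le> v \<Longrightarrow> measure lebesgue {u..v::real} = v - u"
  by (metis cbox_interval lmeasurable_cbox lmeasure_integral content_real integral_const_real content_real mult.right_neutral real_scaleR_def)

lemma ac_mono_eps:
  fixes Q D :: "real \<Rightarrow> real"
  assumes ac: "abs_cont_on {a..b} Q" and ab: "a \<le> b"
    and N: "negligible N"
    and der: "\<And>x. x \<in> {a..b} - N \<Longrightarrow> (Q has_real_derivative D x) (at x) \<and> D x \<ge> 0"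
    and e: "e > 0"
  shows "Q a - Q b \<le> e * (b - a + 1)"
proof -
  obtain \<delta> where \<delta>: "\<delta> > 0" and acd: "\<forall>(n::nat) (a'::nat \<Rightarrow> real) b'.
        (\<forall>k<n. a' k \<le> b' k \<and> {a' k..b' k} \<subseteq> {a..b}) \<and>
        (\<forall>j<n. \<forall>k<n. j \<noteq> k \<longrightarrow> {a' j<..<b' j} \<inter> {a' k<..<b' k} = {}) \<and>
        (\<Sum>k<n. b' k - a' k) < \<delta>
        \<longrightarrow> (\<Sum>k<n. norm (Q (b' k) - Q (a' k))) < e"
    using ac e unfolding abs_cont_on_def by blast
  have Nl: "N \<in> sets lebesgue" using N negligible_iff_null_sets by blast
  obtain U where U: "open U" "N \<subseteq> U" "(U - N) \<in> lmeasurable" "emeasure lebesgue (U - N) < ennreal \<delta>"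
    using sets_lebesgue_outer_open[OF Nl \<delta>] by blast
  have Us: "U \<in> sets lebesgue" using U(1) by (metis borel_open sets_completionI_sets sets_lborel)
  have Nn: "N \<in> null_sets lebesgue" using N negligible_iff_null_sets by blast
  have eU: "emeasure lebesgue U < ennreal \<delta>"
    using U(4) emeasure_Diff_null_set[OF Nn Us] by simp
  have Ul: "U \<in> lmeasurable" using Us eU by (intro fmeasurableI) (auto simp: less_top[symmetric] intro: order.strict_trans)
  have mU: "measure lebesgue U < \<delta>"
    using eU emeasure_eq_measure2[OF Ul] \<delta> by (simp add: ennreal_less_iff)
  have "\<forall>x. \<exists>r>0. (x \<in> U \<longrightarrow> ball x r \<subseteq> U) \<and>
     (x \<notin> U \<and> x \<in> {a..b} \<longrightarrow> (\<forall>y. \<bar>y - x\<bar> < r \<longrightarrow> \<bar>Q y - Q x - D x * (y - x)\<bar> \<le> e * \<bar>y - x\<bar>))"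
  proof
    fix x
    show "\<exists>r>0. (x \<in> U \<longrightarrow> ball x r \<subseteq> U) \<and>
     (x \<notin> U \<and> x \<in> {a..b} \<longrightarrow> (\<forall>y. \<bar>y - x\<bar> < r \<longrightarrow> \<bar>Q y - Q x - D x * (y - x)\<bar> \<le> e * \<bar>y - x\<bar>))"
    proof (cases "x \<in> U")
      case True
      then show ?thesis using U(1) open_contains_ball by blast
    next
      case False
      show ?thesis
      proof (cases "x \<in> {a..b}")
        case True
        then have "x \<in> {a..b} - N" using False U(2) by auto
        then show ?thesis using deriv_approx[OF conjunct1[OF der] e] False by blast
      next
        case F2: False
        show ?thesis using False F2 by (intro exI[of _ 1]) auto
      qed
    qed
  qed
  then have "\<forall>x. \<exists>r. r > 0 \<and> (x \<in> U \<longrightarrow> ball x r \<subseteq> U) \<and>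
     (x \<notin> U \<and> x \<in> {a..b} \<longrightarrow> (\<forall>y. \<bar>y - x\<bar> < r \<longrightarrow> \<bar>Q y - Q x - D x * (y - x)\<bar> \<le> e * \<bar>y - x\<bar>))" by blast
  from choice[OF this] obtain r where rr: "\<forall>x. r x > 0 \<and> (x \<in> U \<longrightarrow> ball x (r x) \<subseteq> U) \<and>
     (x \<notin> U \<and> x \<in> {a..b} \<longrightarrow> (\<forall>y. \<bar>y - x\<bar> < r x \<longrightarrow> \<bar>Q y - Q x - D x * (y - x)\<bar> \<le> e * \<bar>y - x\<bar>))" by blast
  have r: "\<And>x. r x > 0" "\<And>x. x \<in> U \<Longrightarrow> ball x (r x) \<subseteq> U"
    "\<And>x y. x \<notin> U \<Longrightarrow> x \<in> {a..b} \<Longrightarrow> \<bar>y - x\<bar> < r x \<Longrightarrow> \<bar>Q y - Q x - D x * (y - x)\<bar> \<le> e * \<bar>y - x\<bar>"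
    using rr by blast+
  have g: "gauge (\<lambda>x. ball x (r x))" using r(1) by (simp add: gauge_ball_dependent)
  obtain p where p: "p tagged_division_of {a..b}" "(\<lambda>x. ball x (r x)) fine p"
    using fine_division_exists_real[OF g] by blast
  have fin: "finite p" using p(1) by blast
  define B where "B = {xk \<in> p. fst xk \<in> U}"
  define G where "G = p - B"
  have BG: "B \<subseteq> p" "G \<subseteq> p" "B \<inter> G = {}" "p = B \<union> G" unfolding B_def G_def by auto
  have finB: "finite B" "finite G" using fin BG by (auto intro: finite_subset)
  let ?f = "\<lambda>(x::real,K::real set). Q (Sup K) - Q (Inf K)"
  have tot: "sum ?f p = Q b - Q a" using additive_tagged_division_1[OF ab p(1)] by simp
  have "sum ?f p = sum ?f (G \<union> B)" using BG(4) by (simp add: Un_commute)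
  also have "\<dots> = sum ?f G + sum ?f B"
    by (rule sum.union_disjoint) (use finB BG in auto)
  finally have split: "sum ?f p = sum ?f G + sum ?f B" .
  have cont: "sum (\<lambda>(x,K). Henstock_Kurzweil_Integration.content K) p = b - a"
    using additive_content_tagged_division[of p a b] p(1) ab by (simp add: cbox_interval)
  have Gbound: "?f xk \<ge> - e * (\<lambda>(x,K). Henstock_Kurzweil_Integration.content K) xk" if "xk \<in> G" for xk
  proof -
    obtain x K where xk: "xk = (x,K)" by fastforce
    have xK: "(x,K) \<in> p" "x \<notin> U" using that xk unfolding G_def B_def by auto
    obtain u v where uv: "K = {u..v}" "u \<le> x" "x \<le> v" "a \<le> u" "v \<le> b" "Inf K = u" "Sup K = v"
      using tag_interval[OF p(1) xK(1)] by blast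
    have sub: "K \<subseteq> ball x (r x)" using p(2) xK(1) unfolding fine_def by blast
    have xab: "x \<in> {a..b}" using uv by auto
    have "u \<in> K" "v \<in> K" using uv by auto
    then have "u \<in> ball x (r x)" "v \<in> ball x (r x)" using sub by blast+
    then have "\<bar>u - x\<bar> < r x" "\<bar>v - x\<bar> < r x" by (auto simp: dist_real_def abs_minus_commute)
    from r(3)[OF xK(2) xab this(1)] r(3)[OF xK(2) xab this(2)]
    have h1: "\<bar>Q u - Q x - D x * (u - x)\<bar> \<le> e * \<bar>u - x\<bar>" and h2: "\<bar>Q v - Q x - D x * (v - x)\<bar> \<le> e * \<bar>v - x\<bar>" .
    have Dx: "D x \<ge> 0" using der[of x] xab xK(2) U(2) by auto
    have "D x * (v - x) \<ge> 0" "D x * (x - u) \<ge> 0" using Dx uv by auto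
    have a1: "e * \<bar>u - x\<bar> = e * (x - u)" "e * \<bar>v - x\<bar> = e * (v - x)" using uv by auto
    have e1: "D x * (u - x) = - (D x * (x - u))" "- e * (v - u) = - (e * (v - x)) - e * (x - u)"
      by (simp_all add: algebra_simps)
    have h1': "Q u - Q x - D x * (u - x) \<le> e * (x - u)" using abs_le_D1[OF h1] a1(1) by simp
    have h2': "- (Q v - Q x - D x * (v - x)) \<le> e * (v - x)" using abs_le_D2[OF h2] a1(2) by simp
    have "Q v - Q u \<ge> - e * (v - u)"
      using h1' h2' \<open>D x * (v - x) \<ge> 0\<close> \<open>D x * (x - u) \<ge> 0\<close> e1 by linarith
    then show ?thesis using xk uv by simp
  qed
  have "sum ?f G \<ge> sum (\<lambda>xk. - e * (\<lambda>(x,K). Henstock_Kurzweil_Integration.content K) xk) G"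
    using Gbound by (rule sum_mono)
  also have "sum (\<lambda>xk. - e * (\<lambda>(x,K). Henstock_Kurzweil_Integration.content K) xk) G = - e * sum (\<lambda>(x,K). Henstock_Kurzweil_Integration.content K) G"
    by (simp add: sum_distrib_left)
  also have "sum (\<lambda>(x,K). Henstock_Kurzweil_Integration.content K) G \<le> sum (\<lambda>(x,K). Henstock_Kurzweil_Integration.content K) p"
    using BG fin by (intro sum_mono2) auto
  then have "- e * sum (\<lambda>(x,K). Henstock_Kurzweil_Integration.content K) G \<ge> - e * (b - a)" using cont e by simp
  finally have SG: "sum ?f G \<ge> - e * (b - a)" by linarith
  have SB: "sum ?f B \<ge> - e"
  proof -
    define n where "n = card B"
    obtain h where h: "bij_betw h {0..<n} B" using ex_bij_betw_nat_finite[OF finB(1)] n_def by blast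
    define a' where "a' i = Inf (snd (h i))" for i
    define b' where "b' i = Sup (snd (h i))" for i
    have hB: "h i \<in> B" if "i < n" for i using h that by (auto simp: bij_betw_def)
    have hinj: "h i \<noteq> h j" if "i < n" "j < n" "i \<noteq> j" for i j
      using h that by (auto simp: bij_betw_def inj_on_def)
    have Bprop: "\<exists>x u v. xk = (x,{u..v}) \<and> u \<le> v \<and> a \<le> u \<and> v \<le> b \<and> x \<in> U \<and> Inf {u..v} = u \<and> Sup {u..v} = v \<and> {u..v} \<subseteq> U" if "xk \<in> B" for xk
    proof -
      obtain x K where xk: "xk = (x,K)" by fastforce
      have xK: "(x,K) \<in> p" "x \<in> U" using that xk unfolding B_def by auto
      obtain u v where uv: "K = {u..v}" "u \<le> x" "x \<le> v" "a \<le> u" "v \<le> b" "Inf K = u" "Sup K = v"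
        using tag_interval[OF p(1) xK(1)] by blast
      have "K \<subseteq> ball x (r x)" using p(2) xK(1) unfolding fine_def by blast
      then have "K \<subseteq> U" using r(2)[OF xK(2)] by blast
      have "xk = (x,{u..v})" using xk uv by simp
      then show ?thesis using uv xK \<open>K \<subseteq> U\<close>
        by (intro exI[of _ x] exI[of _ u] exI[of _ v]) simp
    qed
    have c1: "\<forall>k<n. a' k \<le> b' k \<and> {a' k..b' k} \<subseteq> {a..b}"
    proof (intro allI impI)
      fix k assume "k < n"
      then obtain x u v where "h k = (x,{u..v})" "u \<le> v" "a \<le> u" "v \<le> b" "Inf {u..v} = u" "Sup {u..v} = v"
        using Bprop[OF hB] by blast
      then show "a' k \<le> b' k \<and> {a' k..b' k} \<subseteq> {a..b}" unfolding a'_def b'_def by auto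
    qed
    have c2: "\<forall>j<n. \<forall>k<n. j \<noteq> k \<longrightarrow> {a' j<..<b' j} \<inter> {a' k<..<b' k} = {}"
    proof (intro allI impI)
      fix j k assume jk: "j < n" "k < n" "j \<noteq> k"
      obtain x1 u1 v1 where 1: "h j = (x1,{u1..v1})" "Inf {u1..v1} = u1" "Sup {u1..v1} = v1"
        using Bprop[OF hB[OF jk(1)]] by blast
      obtain x2 u2 v2 where 2: "h k = (x2,{u2..v2})" "Inf {u2..v2} = u2" "Sup {u2..v2} = v2"
        using Bprop[OF hB[OF jk(2)]] by blast
      have m1: "(x1,{u1..v1}) \<in> p" "(x2,{u2..v2}) \<in> p" using hB[OF jk(1)] hB[OF jk(2)] 1 2 BG(1) by auto
      have m2: "(x1,{u1..v1}) \<noteq> (x2,{u2..v2})" using hinj[OF jk] 1 2 by simp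
      have "interior {u1..v1} \<inter> interior {u2..v2} = {}"
        by (rule tagged_division_ofD(5)[OF p(1) m1 m2])
      then show "{a' j<..<b' j} \<inter> {a' k<..<b' k} = {}" unfolding a'_def b'_def using 1 2 by simp
    qed
    have reidx: "(\<Sum>k<n. g (h k)) = sum g B" for g :: "real \<times> real set \<Rightarrow> real"
      using sum.reindex_bij_betw[OF h, of g] by (simp add: lessThan_atLeast0)
    have lenB: "Sup (snd xk) - Inf (snd xk) = measure lebesgue (snd xk)" if xB: "xk \<in> B" for xk
    proof -
      obtain x u v where "xk = (x,{u..v})" "u \<le> v" "Inf {u..v} = u" "Sup {u..v} = v" using Bprop[OF xB] by blast
      then show ?thesis using measure_Icc_leb[of u v] by simp
    qed
    have "(\<Sum>k<n. b' k - a' k) = (\<Sum>xk\<in>B. Sup (snd xk) - Inf (snd xk))"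
      unfolding a'_def b'_def by (rule reidx)
    also have "\<dots> = (\<Sum>xk\<in>B. measure lebesgue (snd xk))"
      by (rule sum.cong[OF refl]) (rule lenB)
    also have "\<dots> = measure lebesgue (\<Union>(snd ` B))"
    proof (rule measure_negligible_finite_Union_image[symmetric, OF finB(1)])
      fix xk assume xB: "xk \<in> B"
      obtain x u v where "xk = (x,{u..v})" using Bprop[OF xB] by blast
      then show "snd xk \<in> lmeasurable" using lmeasurable_cbox[of u v] by (simp add: cbox_interval)
    next
      show "pairwise (\<lambda>x y. negligible (snd x \<inter> snd y)) B"
      proof (rule pairwiseI)
        fix y z assume yz: "y \<in> B" "z \<in> B" "y \<noteq> z"
        obtain x1 u1 v1 where 1: "y = (x1,{u1..v1})" using Bprop[OF yz(1)] by blast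
        obtain x2 u2 v2 where 2: "z = (x2,{u2..v2})" using Bprop[OF yz(2)] by blast
        have m1: "(x1,{u1..v1}) \<in> p" "(x2,{u2..v2}) \<in> p" using yz 1 2 BG(1) by auto
        have m2: "(x1,{u1..v1}) \<noteq> (x2,{u2..v2})" using yz 1 2 by simp
        have "interior {u1..v1} \<inter> interior {u2..v2} = {}"
          by (rule tagged_division_ofD(5)[OF p(1) m1 m2])
        then have "snd y \<inter> snd z \<subseteq> {u1,v1,u2,v2}"
        proof -
          assume I: "interior {u1..v1} \<inter> interior {u2..v2} = {}"
          show ?thesis
          proof
            fix t assume t: "t \<in> snd y \<inter> snd z"
            show "t \<in> {u1,v1,u2,v2}"
            proof (rule ccontr)
              assume "t \<notin> {u1,v1,u2,v2}"
              then have "t \<in> {u1<..<v1} \<inter> {u2<..<v2}" using t 1 2 by auto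
              then show False using I by auto
            qed
          qed
        qed
        then show "negligible (snd y \<inter> snd z)" by (rule negligible_subset[rotated]) (simp add: negligible_finite)
      qed
    qed
    also have "\<dots> \<le> measure lebesgue U"
    proof (rule measure_mono_fmeasurable[OF _ _ Ul])
      show "\<Union>(snd ` B) \<subseteq> U"
      proof
        fix t assume "t \<in> \<Union>(snd ` B)"
        then obtain xk where xk: "xk \<in> B" "t \<in> snd xk" by blast
        obtain x u v where "xk = (x,{u..v})" "{u..v} \<subseteq> U" using Bprop[OF xk(1)] by blast
        then show "t \<in> U" using xk(2) by auto
      qed
      have "snd xk \<in> sets lebesgue" if xB: "xk \<in> B" for xk
      proof -
        obtain x u v where "xk = (x,{u..v})" using Bprop[OF xB] by blast
        then show ?thesis using lmeasurable_cbox[of u v] by (simp add: cbox_interval fmeasurableD)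
      qed
      then show "\<Union>(snd ` B) \<in> sets lebesgue" using finB(1)
        by (intro sets.finite_Union) auto
    qed
    finally have c3: "(\<Sum>k<n. b' k - a' k) < \<delta>" using mU by linarith
    have "(\<Sum>k<n. norm (Q (b' k) - Q (a' k))) < e"
      using mp[OF spec[OF spec[OF spec[OF acd, of n], of a'], of b'] conjI[OF c1 conjI[OF c2 c3]]] .
    then have "(\<Sum>xk\<in>B. \<bar>?f xk\<bar>) < e"
      unfolding a'_def b'_def using reidx[of "\<lambda>xk. \<bar>?f xk\<bar>"] by (simp add: case_prod_beta)
    moreover have "sum ?f B \<ge> - (\<Sum>xk\<in>B. \<bar>?f xk\<bar>)"
      unfolding sum_negf[symmetric] by (rule sum_mono) linarith
    ultimately show ?thesis by linarith
  qed
  show ?thesis using SG SB tot split by (simp add: algebra_simps)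
qed

lemma ac_mono:
  fixes Q D :: "real \<Rightarrow> real"
  assumes "abs_cont_on {a..b} Q" "a \<le> b" "negligible N"
    "\<And>x. x \<in> {a..b} - N \<Longrightarrow> (Q has_real_derivative D x) (at x) \<and> D x \<ge> 0"
  shows "Q a \<le> Q b"
proof -
  have "Q a \<le> Q b + e" if "e > 0" for e
  proof -
    have pos: "b - a + 1 > 0" using assms(2) by linarith
    then have "e / (b - a + 1) > 0" using that by simp
    from ac_mono_eps[OF assms(1-4) this] show ?thesis using pos by simp
  qed
  then show ?thesis by (rule field_le_epsilon)
qed

lemma cis_lip: "cmod (cis s - cis t) \<le> 2 * \<bar>s - t\<bar>"
proof -
  have "cmod (cis s - cis t) \<le> \<bar>cos s - cos t\<bar> + \<bar>sin s - sin t\<bar>"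
    using cmod_le[of "cis s - cis t"] by simp
  moreover have "\<bar>cos s - cos t\<bar> \<le> \<bar>s - t\<bar>"
  proof -
    have "\<bar>cos s - cos t\<bar> = (2 * \<bar>sin ((s+t)/2)\<bar>) * \<bar>sin ((t-s)/2)\<bar>" by (simp add: cos_diff_cos abs_mult)
    also have "\<dots> \<le> (2 * 1) * \<bar>(t-s)/2\<bar>"
      using abs_sin_x_le_abs_x[of "(t-s)/2"] by (intro mult_mono) (auto simp: abs_sin_le_one)
    finally show ?thesis by simp
  qed
  moreover have "\<bar>sin s - sin t\<bar> \<le> \<bar>s - t\<bar>"
  proof -
    have "\<bar>sin s - sin t\<bar> = (2 * \<bar>cos ((s+t)/2)\<bar>) * \<bar>sin ((s-t)/2)\<bar>" by (simp add: sin_diff_sin abs_mult)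
    also have "\<dots> \<le> (2 * 1) * \<bar>(s-t)/2\<bar>"
      using abs_sin_x_le_abs_x[of "(s-t)/2"] by (intro mult_mono) (auto simp: abs_cos_le_one)
    finally show ?thesis by simp
  qed
  ultimately have "cmod (cis s - cis t) \<le> \<bar>s - t\<bar> + \<bar>s - t\<bar>" by (meson add_mono order_trans)
  then show ?thesis by simp
qed

lemma loc_ac_isCont:
  fixes f :: "real \<Rightarrow> 'b::real_normed_vector"
  assumes "loc_abs_cont f"
  shows "isCont f x"
  unfolding isCont_def LIM_eq
proof (intro allI impI)
  fix r :: real assume r: "r > 0"
  have "abs_cont_on {x-1..x+1} f" using assms unfolding loc_abs_cont_def by blast
  then obtain \<delta> where \<delta>: "\<delta> > 0" and acd: "\<forall>(n::nat) (a'::nat \<Rightarrow> real) b'.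
        (\<forall>k<n. a' k \<le> b' k \<and> {a' k..b' k} \<subseteq> {x-1..x+1}) \<and>
        (\<forall>j<n. \<forall>k<n. j \<noteq> k \<longrightarrow> {a' j<..<b' j} \<inter> {a' k<..<b' k} = {}) \<and>
        (\<Sum>k<n. b' k - a' k) < \<delta>
        \<longrightarrow> (\<Sum>k<n. norm (f (b' k) - f (a' k))) < r"
    using r unfolding abs_cont_on_def by blast
  show "\<exists>s>0. \<forall>y. y \<noteq> x \<and> norm (y - x) < s \<longrightarrow> norm (f y - f x) < r"
  proof (intro exI[of _ "min \<delta> 1"] conjI allI impI)
    show "min \<delta> 1 > 0" using \<delta> by simp
    fix y assume y: "y \<noteq> x \<and> norm (y - x) < min \<delta> 1"
    define a' where "a' = (\<lambda>k::nat. min x y)"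
    define b' where "b' = (\<lambda>k::nat. max x y)"
    have c1: "\<forall>k<1. a' k \<le> b' k \<and> {a' k..b' k} \<subseteq> {x-1..x+1}"
      using y unfolding a'_def b'_def by (auto simp: real_norm_def)
    have c2: "\<forall>j<1. \<forall>k<1. j \<noteq> k \<longrightarrow> {a' j<..<b' j} \<inter> {a' k<..<b' k} = {}" by auto
    have c3: "(\<Sum>k<1. b' k - a' k) < \<delta>" using y unfolding a'_def b'_def by (auto simp: real_norm_def)
    have "(\<Sum>k<(1::nat). norm (f (b' k) - f (a' k))) < r"
      using mp[OF spec[OF spec[OF spec[OF acd, of 1], of a'], of b'] conjI[OF c1 conjI[OF c2 c3]]] .
    then have "norm (f (max x y) - f (min x y)) < r" unfolding a'_def b'_def by simp
    then show "norm (f y - f x) < r"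
      by (cases "x \<le> y") (auto simp: max_def min_def norm_minus_commute)
  qed
qed

lemma comb_ac:
  fixes Q f1 :: "real \<Rightarrow> real" and f2 f3 :: "real \<Rightarrow> complex"
  assumes a1: "abs_cont_on S f1" and a2: "abs_cont_on S f2" and a3: "abs_cont_on S f3" and M: "M > 0"
    and bd: "\<And>x y. x \<in> S \<Longrightarrow> y \<in> S \<Longrightarrow> \<bar>Q y - Q x\<bar> \<le> M * (\<bar>f1 y - f1 x\<bar> + cmod (f2 y - f2 x) + cmod (f3 y - f3 x))"
  shows "abs_cont_on S Q"
  unfolding abs_cont_on_def
proof (intro allI impI)
  fix \<epsilon> :: real assume \<epsilon>: "\<epsilon> > 0"
  define \<eta> where "\<eta> = \<epsilon> / (3 * M)"
  have \<eta>: "\<eta> > 0" using \<epsilon> M unfolding \<eta>_def by simp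
  obtain d1 where d1: "d1 > 0" and A1: "\<forall>(n::nat) (a::nat \<Rightarrow> real) b.
        (\<forall>k<n. a k \<le> b k \<and> {a k..b k} \<subseteq> S) \<and>
        (\<forall>j<n. \<forall>k<n. j \<noteq> k \<longrightarrow> {a j<..<b j} \<inter> {a k<..<b k} = {}) \<and>
        (\<Sum>k<n. b k - a k) < d1
        \<longrightarrow> (\<Sum>k<n. norm (f1 (b k) - f1 (a k))) < \<eta>"
    using a1 \<eta> unfolding abs_cont_on_def by blast
  obtain d2 where d2: "d2 > 0" and A2: "\<forall>(n::nat) (a::nat \<Rightarrow> real) b.
        (\<forall>k<n. a k \<le> b k \<and> {a k..b k} \<subseteq> S) \<and>
        (\<forall>j<n. \<forall>k<n. j \<noteq> k \<longrightarrow> {a j<..<b j} \<inter> {a k<..<b k} = {}) \<and>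
        (\<Sum>k<n. b k - a k) < d2
        \<longrightarrow> (\<Sum>k<n. norm (f2 (b k) - f2 (a k))) < \<eta>"
    using a2 \<eta> unfolding abs_cont_on_def by blast
  obtain d3 where d3: "d3 > 0" and A3: "\<forall>(n::nat) (a::nat \<Rightarrow> real) b.
        (\<forall>k<n. a k \<le> b k \<and> {a k..b k} \<subseteq> S) \<and>
        (\<forall>j<n. \<forall>k<n. j \<noteq> k \<longrightarrow> {a j<..<b j} \<inter> {a k<..<b k} = {}) \<and>
        (\<Sum>k<n. b k - a k) < d3
        \<longrightarrow> (\<Sum>k<n. norm (f3 (b k) - f3 (a k))) < \<eta>"
    using a3 \<eta> unfolding abs_cont_on_def by blast
  show "\<exists>\<delta>>0. \<forall>(n::nat) (a::nat \<Rightarrow> real) b.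
        (\<forall>k<n. a k \<le> b k \<and> {a k..b k} \<subseteq> S) \<and>
        (\<forall>j<n. \<forall>k<n. j \<noteq> k \<longrightarrow> {a j<..<b j} \<inter> {a k<..<b k} = {}) \<and>
        (\<Sum>k<n. b k - a k) < \<delta>
        \<longrightarrow> (\<Sum>k<n. norm (Q (b k) - Q (a k))) < \<epsilon>"
  proof (intro exI[of _ "min d1 (min d2 d3)"] conjI allI impI)
    show "min d1 (min d2 d3) > 0" using d1 d2 d3 by simp
    fix n :: nat and a b :: "nat \<Rightarrow> real"
    assume H: "(\<forall>k<n. a k \<le> b k \<and> {a k..b k} \<subseteq> S) \<and>
        (\<forall>j<n. \<forall>k<n. j \<noteq> k \<longrightarrow> {a j<..<b j} \<inter> {a k<..<b k} = {}) \<and>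
        (\<Sum>k<n. b k - a k) < min d1 (min d2 d3)"
    have H1: "(\<forall>k<n. a k \<le> b k \<and> {a k..b k} \<subseteq> S) \<and>
        (\<forall>j<n. \<forall>k<n. j \<noteq> k \<longrightarrow> {a j<..<b j} \<inter> {a k<..<b k} = {}) \<and>
        (\<Sum>k<n. b k - a k) < d1" using H unfolding min_less_iff_conj by blast
    have H2: "(\<forall>k<n. a k \<le> b k \<and> {a k..b k} \<subseteq> S) \<and>
        (\<forall>j<n. \<forall>k<n. j \<noteq> k \<longrightarrow> {a j<..<b j} \<inter> {a k<..<b k} = {}) \<and>
        (\<Sum>k<n. b k - a k) < d2" using H unfolding min_less_iff_conj by blast
    have H3: "(\<forall>k<n. a k \<le> b k \<and> {a k..b k} \<subseteq> S) \<and>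
        (\<forall>j<n. \<forall>k<n. j \<noteq> k \<longrightarrow> {a j<..<b j} \<inter> {a k<..<b k} = {}) \<and>
        (\<Sum>k<n. b k - a k) < d3" using H unfolding min_less_iff_conj by blast
    have s1: "(\<Sum>k<n. norm (f1 (b k) - f1 (a k))) < \<eta>"
      using mp[OF spec[OF spec[OF spec[OF A1, of n], of a], of b] H1] .
    have s2: "(\<Sum>k<n. norm (f2 (b k) - f2 (a k))) < \<eta>"
      using mp[OF spec[OF spec[OF spec[OF A2, of n], of a], of b] H2] .
    have s3: "(\<Sum>k<n. norm (f3 (b k) - f3 (a k))) < \<eta>"
      using mp[OF spec[OF spec[OF spec[OF A3, of n], of a], of b] H3] .
    have "(\<Sum>k<n. norm (Q (b k) - Q (a k))) \<le>
          (\<Sum>k<n. M * (norm (f1 (b k) - f1 (a k)) + norm (f2 (b k) - f2 (a k)) + norm (f3 (b k) - f3 (a k))))"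
    proof (rule sum_mono)
      fix k assume "k \<in> {..<n}"
      then have "a k \<le> b k \<and> {a k..b k} \<subseteq> S" using H by auto
      then have "a k \<in> S" "b k \<in> S" by auto
      then show "norm (Q (b k) - Q (a k)) \<le> M * (norm (f1 (b k) - f1 (a k)) + norm (f2 (b k) - f2 (a k)) + norm (f3 (b k) - f3 (a k)))"
        using bd[of "a k" "b k"] by (simp add: real_norm_def)
    qed
    also have "\<dots> = M * ((\<Sum>k<n. norm (f1 (b k) - f1 (a k))) + (\<Sum>k<n. norm (f2 (b k) - f2 (a k))) + (\<Sum>k<n. norm (f3 (b k) - f3 (a k))))"
      by (simp add: sum_distrib_left sum.distrib distrib_left)
    also have "\<dots> < M * (3 * \<eta>)"
      using s1 s2 s3 M by (intro mult_strict_left_mono) auto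
    also have "\<dots> = \<epsilon>" unfolding \<eta>_def using M by simp
    finally show "(\<Sum>k<n. norm (Q (b k) - Q (a k))) < \<epsilon>" .
  qed
qed

lemma mono_integrable_zero:
  fixes Q :: "real \<Rightarrow> real"
  assumes mono: "\<And>x y. x \<le> y \<Longrightarrow> Q x \<le> Q y" and int: "integrable lborel Q"
  shows "Q x = 0"
proof (rule ccontr)
  assume nz: "Q x \<noteq> 0"
  have intA: "integrable lborel (\<lambda>y. \<bar>Q y\<bar>)" using int by simp
  define I where "I = (LINT y|lborel. \<bar>Q y\<bar>)"
  have key: "real n * \<bar>Q x\<bar> \<le> I" for n :: nat
  proof -
    define A where "A = (if Q x > 0 then {x..x + real n} else {x - real n..x})"
    have Ai: "integrable lborel (indicator A :: real \<Rightarrow> real)"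
      unfolding A_def by (intro integrable_real_indicator) auto
    have mA: "measure lborel A = real n" unfolding A_def by auto
    have "(LINT y|lborel. \<bar>Q x\<bar> * indicator A y) \<le> I"
      unfolding I_def
    proof (rule integral_mono[OF _ intA])
      show "integrable lborel (\<lambda>y. \<bar>Q x\<bar> * indicator A y)" using Ai by simp
      fix y
      show "\<bar>Q x\<bar> * indicator A y \<le> \<bar>Q y\<bar>"
      proof (cases "y \<in> A")
        case True
        show ?thesis
        proof (cases "Q x > 0")
          case True
          then have "x \<le> y" using \<open>y \<in> A\<close> unfolding A_def by auto
          then show ?thesis using mono[of x y] True \<open>y \<in> A\<close> by simp
        next
          case False
          then have "y \<le> x" "Q x < 0" using \<open>y \<in> A\<close> nz unfolding A_def by auto
          then show ?thesis using mono[of y x] \<open>y \<in> A\<close> by simp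
        qed
      qed simp
    qed
    also have "(LINT y|lborel. \<bar>Q x\<bar> * indicator A y) = \<bar>Q x\<bar> * real n"
      using mA by simp
    finally show ?thesis by (simp add: mult.commute)
  qed
  obtain n :: nat where "I / \<bar>Q x\<bar> < real n" using reals_Archimedean2 by blast
  then have "I < real n * \<bar>Q x\<bar>" using nz by (simp add: field_simps)
  then show False using key[of n] by simp
qed

lemma core_generic:
  fixes Q W D :: "real \<Rightarrow> real"
  assumes ac: "\<And>a b. abs_cont_on {a..b} Q" and int: "integrable lborel Q"
    and der: "AE x in lborel. (Q has_real_derivative D x) (at x) \<and> D x \<ge> \<delta> * W x"
    and \<delta>: "\<delta> > 0" and W: "\<And>x. W x \<ge> 0"
  shows "AE x in lborel. W x = 0"
proof -
  from der obtain N where N: "{x \<in> space lborel. \<not> ((Q has_real_derivative D x) (at x) \<and> D x \<ge> \<delta> * W x)} \<subseteq> N"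
    "emeasure lborel N = 0" "N \<in> sets lborel" by (rule AE_E)
  have "N \<in> null_sets lborel" using N by auto
  then have "N \<in> null_sets lebesgue" by (rule null_sets_completionI)
  then have negN: "negligible N" using negligible_iff_null_sets by blast
  have mono: "Q x \<le> Q y" if "x \<le> y" for x y
  proof (rule ac_mono[OF ac that negN])
    fix z assume "z \<in> {x..y} - N"
    then have "(Q has_real_derivative D z) (at z) \<and> D z \<ge> \<delta> * W z" using N(1) by auto
    moreover have "\<delta> * W z \<ge> 0" using \<delta> W[of z] by simp
    ultimately show "(Q has_real_derivative D z) (at z) \<and> D z \<ge> 0" by auto
  qed
  have Q0: "Q = (\<lambda>_. 0)" using mono_integrable_zero[OF mono int] by auto
  from der show ?thesis
  proof (rule eventually_mono)
    fix x assume H: "(Q has_real_derivative D x) (at x) \<and> D x \<ge> \<delta> * W x"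
    have "((\<lambda>_. 0) has_real_derivative 0) (at x)" by simp
    then have "D x = 0" using H Q0 DERIV_unique by metis
    then have "\<delta> * W x \<le> 0" using H by simp
    then show "W x = 0" using \<delta> W[of x] by (simp add: mult_le_0_iff)
  qed
qed

lemma cis_deriv:
  assumes "(\<phi> has_vector_derivative p) (at x)"
  shows "((\<lambda>y. cis (\<phi> y)) has_vector_derivative (\<i> * complex_of_real p * cis (\<phi> x))) (at x)"
proof -
  have "((\<lambda>z. exp (\<i> * z)) has_field_derivative \<i> * exp (\<i> * complex_of_real (\<phi> x))) (at (complex_of_real (\<phi> x)))"
    by (auto intro!: derivative_eq_intros)
  then have "((\<lambda>t. exp (\<i> * complex_of_real t)) has_vector_derivative \<i> * exp (\<i> * complex_of_real (\<phi> x))) (at (\<phi> x))"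
    by (rule has_vector_derivative_real_field)
  then have c: "(cis has_vector_derivative \<i> * cis (\<phi> x)) (at (\<phi> x))"
    by (simp add: cis_conv_exp[abs_def] cis_conv_exp)
  from vector_diff_chain_at[OF assms c] show ?thesis
    by (simp add: o_def scaleR_conv_of_real mult.assoc mult.left_commute)
qed

lemma deriv_Q:
  fixes u1 u2 :: "real \<Rightarrow> complex" and \<phi> :: "real \<Rightarrow> real" and q :: complex
  assumes d1: "(u1 has_vector_derivative v1) (at x)" and d2: "(u2 has_vector_derivative v2) (at x)"
    and dphi: "(\<phi> has_vector_derivative p) (at x)"
    and eq1: "\<i> * v1 - \<i> * q * u2 x = complex_of_real l * u1 x"
    and eq2: "\<i> * cnj q * u1 x - \<i> * v2 = complex_of_real l * u2 x"
    and polar: "q = complex_of_real (cmod q) * cis (\<phi> x)"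
    and bd: "\<bar>p / 2 + l\<bar> \<le> cmod q - \<delta>"
  shows "\<exists>Dv. ((\<lambda>y. Re (cis (\<phi> y) * cnj (u1 y) * u2 y)) has_real_derivative Dv) (at x) \<and>
             Dv \<ge> \<delta> * ((cmod (u1 x))\<^sup>2 + (cmod (u2 x))\<^sup>2)"
proof -
  define c where "c = cis (\<phi> x)"
  define a where "a = u1 x"
  define b where "b = u2 x"
  define m where "m = cmod q"
  define S where "S = (cmod a)\<^sup>2 + (cmod b)\<^sup>2"
  define w where "w = c * cnj a * b"
  have hc: "((\<lambda>y. cis (\<phi> y)) has_vector_derivative (\<i> * complex_of_real p * c)) (at x)"
    unfolding c_def by (rule cis_deriv[OF dphi])
  have h1: "((\<lambda>y. cis (\<phi> y) * cnj (u1 y)) has_vector_derivative (c * cnj v1 + \<i> * complex_of_real p * c * cnj a)) (at x)"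
    using has_vector_derivative_mult[OF hc has_vector_derivative_cnj[OF d1]] unfolding c_def a_def by simp
  define DD where "DD = c * cnj a * v2 + (c * cnj v1 + \<i> * complex_of_real p * c * cnj a) * b"
  have h2: "((\<lambda>y. cis (\<phi> y) * cnj (u1 y) * u2 y) has_vector_derivative DD) (at x)"
    using has_vector_derivative_mult[OF h1 d2] unfolding DD_def c_def a_def b_def by simp
  have h3: "((\<lambda>y. Re (cis (\<phi> y) * cnj (u1 y) * u2 y)) has_real_derivative Re DD) (at x)"
    unfolding has_real_derivative_iff_has_vector_derivative
    using bounded_linear.has_vector_derivative[OF bounded_linear_Re h2] .
  have ii: "\<i> * \<i> = (-1::complex)" by simp
  have v1: "v1 = q * b - \<i> * complex_of_real l * a"
  proof -
    have "\<i> * v1 = \<i> * (q * b - \<i> * complex_of_real l * a)"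
      using eq1 unfolding a_def b_def by (simp add: algebra_simps)
    then show ?thesis by simp
  qed
  have v2: "v2 = cnj q * a + \<i> * complex_of_real l * b"
  proof -
    have "\<i> * v2 = \<i> * (cnj q * a + \<i> * complex_of_real l * b)"
      using eq2 unfolding a_def b_def by (simp add: algebra_simps)
    then show ?thesis by simp
  qed
  have cv1: "cnj v1 = cnj q * cnj b + \<i> * complex_of_real l * cnj a" using v1 by simp
  have cq: "cnj q = complex_of_real m * cnj c" using polar unfolding m_def c_def
    by (metis complex_cnj_complex_of_real complex_cnj_mult)
  have cc: "c * cnj c = 1" unfolding c_def by (simp add: cis_cnj cis_mult)
  have aa: "cnj a * a = complex_of_real ((cmod a)\<^sup>2)" using complex_norm_square[of a] by (simp add: mult.commute)
  have bb: "cnj b * b = complex_of_real ((cmod b)\<^sup>2)" using complex_norm_square[of b] by (simp add: mult.commute)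
  have DDe0: "DD = complex_of_real m * (complex_of_real ((cmod a)\<^sup>2) + complex_of_real ((cmod b)\<^sup>2)) + \<i> * (2 * complex_of_real l + complex_of_real p) * w"
    unfolding DD_def w_def using v2 cv1 cq cc aa bb ii by algebra
  have DDe: "DD = complex_of_real (m * S) + \<i> * complex_of_real (2 * l + p) * w"
    unfolding DDe0 S_def by simp
  have ReDD: "Re DD = m * S - (2 * l + p) * Im w" unfolding DDe by simp
  have w1: "\<bar>Im w\<bar> \<le> cmod a * cmod b"
  proof -
    have "\<bar>Im w\<bar> \<le> cmod w" by (rule abs_Im_le_cmod)
    also have "cmod w = cmod a * cmod b" unfolding w_def c_def by (simp add: norm_mult)
    finally show ?thesis .
  qed
  have w2: "2 * (cmod a * cmod b) \<le> S"
  proof -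
    have "0 \<le> (cmod a - cmod b)\<^sup>2" by simp
    then show ?thesis unfolding S_def power2_diff by linarith
  qed
  have w3: "(2 * l + p) * Im w \<le> \<bar>2 * l + p\<bar> * \<bar>Im w\<bar>"
    by (metis abs_ge_self abs_mult)
  have w4: "\<bar>2 * l + p\<bar> * \<bar>Im w\<bar> \<le> \<bar>2 * l + p\<bar> * (cmod a * cmod b)"
    using w1 by (rule mult_left_mono) simp
  have e5: "\<bar>2 * l + p\<bar> * (cmod a * cmod b) = \<bar>p / 2 + l\<bar> * (2 * (cmod a * cmod b))"
    by (simp add: abs_if field_simps)
  have w5: "\<bar>p / 2 + l\<bar> * (2 * (cmod a * cmod b)) \<le> \<bar>p / 2 + l\<bar> * S"
    using w2 by (rule mult_left_mono) simp
  have S0: "S \<ge> 0" unfolding S_def by simp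
  have w6: "\<bar>p / 2 + l\<bar> * S \<le> (m - \<delta>) * S"
    using bd S0 unfolding m_def by (rule mult_right_mono)
  have e7: "(m - \<delta>) * S = m * S - \<delta> * S" by (simp add: algebra_simps)
  have "Re DD \<ge> \<delta> * S" using ReDD w3 w4 e5 w5 w6 e7 by linarith
  then show ?thesis using h3 unfolding S_def a_def b_def by blast
qed

lemma AE_False_lborel: "\<not> (AE x::real in lborel. False)"
proof
  assume "AE x::real in lborel. False"
  then obtain N where N: "{x::real \<in> space lborel. \<not> False} \<subseteq> N" "emeasure lborel N = 0" "N \<in> sets lborel"
    by (rule AE_E)
  then have "(UNIV :: real set) \<subseteq> N" by simp
  then have "emeasure lborel (UNIV :: real set) \<le> emeasure lborel N"
    using N(3) by (intro emeasure_mono) auto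
  then show False using N(2) by simp
qed

lemma Linf_norm_bound:
  fixes g :: "real \<Rightarrow> real"
  assumes meas: "g \<in> borel_measurable lborel" and B: "AE x in lborel. \<bar>g x\<bar> \<le> B"
  shows "AE x in lborel. \<bar>g x\<bar> \<le> Linf_norm g"
proof -
  define E where "E = esssup lborel (\<lambda>x. ereal \<bar>g x\<bar>)"
  have m2: "(\<lambda>x. ereal \<bar>g x\<bar>) \<in> borel_measurable lborel" using meas by measurable
  have EB: "E \<le> ereal B" unfolding E_def
    by (rule esssup_I[OF m2]) (use B in \<open>auto elim!: eventually_mono\<close>)
  have AEE: "AE x in lborel. ereal \<bar>g x\<bar> \<le> E" unfolding E_def by (rule esssup_AE)
  show ?thesis
  proof (cases E)
    case (real r)
    then have "Linf_norm g = r" unfolding Linf_norm_def E_def[symmetric] by simp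
    then show ?thesis using AEE real by (auto elim!: eventually_mono)
  next
    case PInf then show ?thesis using EB by simp
  next
    case MInf
    then have "AE x::real in lborel. False" using AEE by (auto elim!: eventually_mono)
    then show ?thesis using AE_False_lborel by blast
  qed
qed

lemma prod3_lip:
  fixes c1 c2 a1 a2 b1 b2 :: complex
  assumes c1: "cmod c1 = 1" and a1: "cmod a1 \<le> K" and a2: "cmod a2 \<le> K" and b2: "cmod b2 \<le> K"
  shows "cmod (c2 * cnj a2 * b2 - c1 * cnj a1 * b1) \<le> K * K * cmod (c2 - c1) + K * cmod (a2 - a1) + K * cmod (b2 - b1)"
proof -
  have K0: "K \<ge> 0" using a1 norm_ge_zero order_trans by blast
  define X where "X = (c2 - c1) * cnj a2 * b2"
  define Y where "Y = c1 * (cnj a2 - cnj a1) * b2"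
  define Z where "Z = c1 * cnj a1 * (b2 - b1)"
  have "c2 * cnj a2 * b2 - c1 * cnj a1 * b1 = X + Y + Z"
    unfolding X_def Y_def Z_def by (simp add: algebra_simps)
  then have t: "cmod (c2 * cnj a2 * b2 - c1 * cnj a1 * b1) \<le> cmod X + cmod Y + cmod Z"
    using norm_triangle_le[OF add_mono[OF norm_triangle_ineq[of X Y] order_refl[of "cmod Z"]]]
    by (simp add: add.assoc)
  have "cmod X = cmod (c2 - c1) * (cmod a2 * cmod b2)" unfolding X_def by (simp add: norm_mult)
  also have "\<dots> \<le> cmod (c2 - c1) * (K * K)"
    using a2 b2 K0 by (intro mult_left_mono mult_mono) auto
  finally have x: "cmod X \<le> K * K * cmod (c2 - c1)" by (simp add: mult.commute)
  have "cnj a2 - cnj a1 = cnj (a2 - a1)" by simp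
  then have "cmod Y = cmod (a2 - a1) * cmod b2"
    unfolding Y_def using c1 by (simp only: norm_mult complex_mod_cnj)
  also have "\<dots> \<le> cmod (a2 - a1) * K" using b2 by (intro mult_left_mono) auto
  finally have y: "cmod Y \<le> K * cmod (a2 - a1)" by (simp add: mult.commute)
  have "cmod Z = cmod a1 * cmod (b2 - b1)" unfolding Z_def using c1 by (simp add: norm_mult)
  also have "\<dots> \<le> K * cmod (b2 - b1)" using a1 by (intro mult_right_mono) auto
  finally have z: "cmod Z \<le> K * cmod (b2 - b1)" .
  show ?thesis using t x y z by linarith
qed

lemma no_eig_core:
  fixes q :: "real \<Rightarrow> complex" and \<phi> \<phi>' :: "real \<Rightarrow> real" and u1 u2 u1' u2' :: "real \<Rightarrow> complex"
  assumes polar: "\<And>x. q x = complex_of_real (cmod (q x)) * cis (\<phi> x)"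
    and phi_ac: "loc_abs_cont \<phi>" and phi_deriv: "ae_deriv \<phi> \<phi>'"
    and H1a: "H1 u1 u1'" and H1b: "H1 u2 u2'"
    and eig: "AE x in lborel. \<i> * u1' x - \<i> * q x * u2 x = complex_of_real l * u1 x \<and>
           \<i> * cnj (q x) * u1 x - \<i> * u2' x = complex_of_real l * u2 x"
    and bd: "AE x in lborel. \<bar>\<phi>' x / 2 + l\<bar> \<le> cmod (q x) - \<delta>" and \<delta>: "\<delta> > 0"
  shows "AE x in lborel. u1 x = 0 \<and> u2 x = 0"
proof -
  from H1a have L2a: "L2 u1" and aca: "loc_abs_cont u1" and da: "ae_deriv u1 u1'" unfolding H1_def by auto
  from H1b have L2b: "L2 u2" and acb: "loc_abs_cont u2" and db: "ae_deriv u2 u2'" unfolding H1_def by auto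
  define Q where "Q y = Re (cis (\<phi> y) * cnj (u1 y) * u2 y)" for y
  define W where "W x = (cmod (u1 x))\<^sup>2 + (cmod (u2 x))\<^sup>2" for x
  have c\<phi>: "isCont \<phi> x" for x using loc_ac_isCont[OF phi_ac] .
  have c1: "isCont u1 x" for x using loc_ac_isCont[OF aca] .
  have c2: "isCont u2 x" for x using loc_ac_isCont[OF acb] .
  have icis: "isCont cis t" for t
    using continuous_on_cis[OF continuous_on_id, of UNIV] by (simp add: continuous_on_eq_continuous_at)
  have ccis: "isCont (\<lambda>y. cis (\<phi> y)) x" for x
    using continuous_at_compose[of x \<phi> cis, OF c\<phi> icis] by (simp add: o_def)
  have contQ: "isCont Q x" for x
    unfolding Q_def using ccis[of x] c1[of x] c2[of x] by (intro isCont_Re isCont_mult isCont_cnj)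
  have ac: "abs_cont_on {a..b} Q" for a b
  proof -
    have "continuous_on {a..b} u1" using c1 by (simp add: continuous_at_imp_continuous_on)
    then have "bounded (u1 ` {a..b})" by (rule compact_imp_bounded[OF compact_continuous_image[OF _ compact_Icc]])
    then obtain K10 where "\<forall>y\<in>u1 ` {a..b}. norm y \<le> K10" unfolding Elementary_Metric_Spaces.bounded_iff by blast
    then have K1: "\<forall>x\<in>{a..b}. cmod (u1 x) \<le> K10" by auto
    have "continuous_on {a..b} u2" using c2 by (simp add: continuous_at_imp_continuous_on)
    then have "bounded (u2 ` {a..b})" by (rule compact_imp_bounded[OF compact_continuous_image[OF _ compact_Icc]])
    then obtain K20 where "\<forall>y\<in>u2 ` {a..b}. norm y \<le> K20" unfolding Elementary_Metric_Spaces.bounded_iff by blast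
    then have K2: "\<forall>x\<in>{a..b}. cmod (u2 x) \<le> K20" by auto
    define K where "K = max 1 (max K10 K20)"
    have K1': "\<forall>x\<in>{a..b}. cmod (u1 x) \<le> K" using K1 unfolding K_def by force
    have K2': "\<forall>x\<in>{a..b}. cmod (u2 x) \<le> K" using K2 unfolding K_def by force
    have K: "K \<ge> 1" unfolding K_def by simp
    define M where "M = 2 * K * K + K"
    have M: "M > 0" unfolding M_def using K by (simp add: add_pos_pos)
    have aphi: "abs_cont_on {a..b} \<phi>" using phi_ac unfolding loc_abs_cont_def by blast
    have au1: "abs_cont_on {a..b} u1" using aca unfolding loc_abs_cont_def by blast
    have au2: "abs_cont_on {a..b} u2" using acb unfolding loc_abs_cont_def by blast
    show ?thesis
    proof (rule comb_ac[OF aphi au1 au2 M])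
      fix x y assume xy: "x \<in> {a..b}" "y \<in> {a..b}"
      have "\<bar>Q y - Q x\<bar> = \<bar>Re (cis (\<phi> y) * cnj (u1 y) * u2 y - cis (\<phi> x) * cnj (u1 x) * u2 x)\<bar>"
        unfolding Q_def by simp
      also have "\<dots> \<le> cmod (cis (\<phi> y) * cnj (u1 y) * u2 y - cis (\<phi> x) * cnj (u1 x) * u2 x)"
        by (rule abs_Re_le_cmod)
      also have "\<dots> \<le> K * K * cmod (cis (\<phi> y) - cis (\<phi> x)) + K * cmod (u1 y - u1 x) + K * cmod (u2 y - u2 x)"
        by (rule prod3_lip) (use xy K1' K2' in auto)
      also have "K * K * cmod (cis (\<phi> y) - cis (\<phi> x)) \<le> K * K * (2 * \<bar>\<phi> y - \<phi> x\<bar>)"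
        using K by (intro mult_left_mono cis_lip) auto
      also have "K * K * (2 * \<bar>\<phi> y - \<phi> x\<bar>) + K * cmod (u1 y - u1 x) + K * cmod (u2 y - u2 x)
          \<le> M * \<bar>\<phi> y - \<phi> x\<bar> + M * cmod (u1 y - u1 x) + M * cmod (u2 y - u2 x)"
      proof -
        have "K * K * (2 * \<bar>\<phi> y - \<phi> x\<bar>) = (2 * K * K) * \<bar>\<phi> y - \<phi> x\<bar>" by (simp add: algebra_simps)
        also have "\<dots> \<le> M * \<bar>\<phi> y - \<phi> x\<bar>"
          unfolding M_def using K by (intro mult_right_mono) auto
        finally have "K * K * (2 * \<bar>\<phi> y - \<phi> x\<bar>) \<le> M * \<bar>\<phi> y - \<phi> x\<bar>" .
        moreover have "K * cmod (u1 y - u1 x) \<le> M * cmod (u1 y - u1 x)"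
          unfolding M_def using K by (intro mult_right_mono) auto
        moreover have "K * cmod (u2 y - u2 x) \<le> M * cmod (u2 y - u2 x)"
          unfolding M_def using K by (intro mult_right_mono) auto
        ultimately show ?thesis by linarith
      qed
      finally show "\<bar>Q y - Q x\<bar> \<le> M * (\<bar>\<phi> y - \<phi> x\<bar> + cmod (u1 y - u1 x) + cmod (u2 y - u2 x))"
        by (simp add: distrib_left)
    qed
  qed
  have intW: "integrable lborel W"
    using L2a L2b unfolding L2_def W_def by simp
  have measQ: "Q \<in> borel_measurable lborel"
    using borel_measurable_continuous_onI[of Q] contQ by (simp add: continuous_at_imp_continuous_on)
  have QW: "norm (Q x) \<le> norm (W x)" for x
  proof -
    have "norm (Q x) \<le> cmod (cis (\<phi> x) * cnj (u1 x) * u2 x)" unfolding Q_def real_norm_def by (rule abs_Re_le_cmod)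
    also have "\<dots> = cmod (u1 x) * cmod (u2 x)" by (simp add: norm_mult)
    also have "\<dots> \<le> W x"
    proof -
      have "0 \<le> (cmod (u1 x) - cmod (u2 x))\<^sup>2" by simp
      moreover have "0 \<le> cmod (u1 x) * cmod (u2 x)" by simp
      ultimately show ?thesis unfolding W_def power2_diff by linarith
    qed
    also have "W x = norm (W x)" unfolding W_def by simp
    finally show ?thesis .
  qed
  have int: "integrable lborel Q"
    by (rule Bochner_Integration.integrable_bound[OF intW measQ]) (use QW in auto)
  define P where "P x Dv \<longleftrightarrow> (Q has_real_derivative Dv) (at x) \<and> Dv \<ge> \<delta> * W x" for x Dv
  define D where "D x = (SOME Dv. P x Dv)" for x
  have allAE: "AE x in lborel. (\<phi> has_vector_derivative \<phi>' x) (at x) \<and> (u1 has_vector_derivative u1' x) (at x) \<and>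
      (u2 has_vector_derivative u2' x) (at x) \<and>
      (\<i> * u1' x - \<i> * q x * u2 x = complex_of_real l * u1 x \<and>
           \<i> * cnj (q x) * u1 x - \<i> * u2' x = complex_of_real l * u2 x) \<and>
      \<bar>\<phi>' x / 2 + l\<bar> \<le> cmod (q x) - \<delta>"
    using phi_deriv da db eig bd unfolding ae_deriv_def by eventually_elim auto
  have der: "AE x in lborel. (Q has_real_derivative D x) (at x) \<and> D x \<ge> \<delta> * W x"
    using allAE
  proof (rule eventually_mono)
    fix x assume H: "(\<phi> has_vector_derivative \<phi>' x) (at x) \<and> (u1 has_vector_derivative u1' x) (at x) \<and>
      (u2 has_vector_derivative u2' x) (at x) \<and>
      (\<i> * u1' x - \<i> * q x * u2 x = complex_of_real l * u1 x \<and>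
           \<i> * cnj (q x) * u1 x - \<i> * u2' x = complex_of_real l * u2 x) \<and>
      \<bar>\<phi>' x / 2 + l\<bar> \<le> cmod (q x) - \<delta>"
    have "\<exists>Dv. P x Dv"
      unfolding P_def Q_def W_def
      using deriv_Q[of u1 "u1' x" x u2 "u2' x" \<phi> "\<phi>' x" "q x" l \<delta>] H polar[of x] by blast
    then have "P x (D x)" unfolding D_def by (rule someI_ex)
    then show "(Q has_real_derivative D x) (at x) \<and> D x \<ge> \<delta> * W x" unfolding P_def .
  qed
  have W0: "W x \<ge> 0" for x unfolding W_def by simp
  have "AE x in lborel. W x = 0" by (rule core_generic[OF ac int der \<delta> W0])
  then show ?thesis by (rule eventually_mono) (simp add: W_def)
qed

theorem corollary2p4:
  fixes q :: "real \<Rightarrow> complex" and \<phi> \<phi>' :: "real \<Rightarrow> real"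
  assumes polar: "\<And>x. q x = complex_of_real (cmod (q x)) * cis (\<phi> x)"
    and q_Linf: "Linf (\<lambda>x. cmod (q x))"
    and q_nz: "\<And>x. q x \<noteq> 0"
    and phi_ac: "loc_abs_cont \<phi>"
    and phi_deriv: "ae_deriv \<phi> \<phi>'"
    and dphi_Linf: "Linf \<phi>'"
  shows "(\<forall>lam::real. is_eigenvalue q (complex_of_real lam) \<longrightarrow>
            (\<forall>c::real.
               c - lam \<le> Linf_norm (pos_part (\<lambda>x. \<phi>' x / 2 - cmod (q x) + c))
             \<or> c + lam \<le> Linf_norm (neg_part (\<lambda>x. \<phi>' x / 2 + cmod (q x) - c))))
       \<and> (\<forall>c::real. c > 0 \<longrightarrow>
            (AE x in lborel. cmod (q x) \<ge> c + \<bar>\<phi>' x\<bar> / 2) \<longrightarrow>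
            (\<forall>lam::real. lam \<in> {-c<..<c} \<longrightarrow> \<not> is_eigenvalue q (complex_of_real lam)))"
proof (intro conjI allI impI)
  have m\<phi>: "\<phi>' \<in> borel_measurable lborel" using dphi_Linf unfolding Linf_def by blast
  have mq: "(\<lambda>x. cmod (q x)) \<in> borel_measurable lborel" using q_Linf unfolding Linf_def by blast
  obtain C1 where C1: "AE x in lborel. \<bar>\<phi>' x\<bar> \<le> C1" using dphi_Linf unfolding Linf_def by blast
  obtain C2 where C2: "AE x in lborel. \<bar>cmod (q x)\<bar> \<le> C2" using q_Linf unfolding Linf_def by blast
  have core: "False" if ev: "is_eigenvalue q (complex_of_real l)"
      and bd: "AE x in lborel. \<bar>\<phi>' x / 2 + l\<bar> \<le> cmod (q x) - \<delta>" and \<delta>: "\<delta> > 0" for l \<delta>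
  proof -
    obtain u1 u2 u1' u2' where H1a: "H1 u1 u1'" and H1b: "H1 u2 u2'"
      and nt: "\<not> (AE x in lborel. u1 x = 0 \<and> u2 x = 0)"
      and eig: "AE x in lborel. \<i> * u1' x - \<i> * q x * u2 x = complex_of_real l * u1 x \<and>
           \<i> * cnj (q x) * u1 x - \<i> * u2' x = complex_of_real l * u2 x"
      using ev unfolding is_eigenvalue_def by blast
    have "AE x in lborel. u1 x = 0 \<and> u2 x = 0"
      by (rule no_eig_core[OF polar phi_ac phi_deriv H1a H1b eig bd \<delta>])
    then show False using nt by blast
  qed
  {
    fix lam c :: real
    assume ev: "is_eigenvalue q (complex_of_real lam)"
    define g1 where "g1 = pos_part (\<lambda>x. \<phi>' x / 2 - cmod (q x) + c)"
    define g2 where "g2 = neg_part (\<lambda>x. \<phi>' x / 2 + cmod (q x) - c)"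
    have mg1: "g1 \<in> borel_measurable lborel" unfolding g1_def pos_part_def using m\<phi> mq by measurable
    have mg2: "g2 \<in> borel_measurable lborel" unfolding g2_def neg_part_def using m\<phi> mq by measurable
    have bg1: "AE x in lborel. \<bar>g1 x\<bar> \<le> C1 / 2 + C2 + \<bar>c\<bar>"
      using C1 C2
    proof eventually_elim
      case (elim x)
      have p0: "0 \<le> cmod (q x)" by simp
      have p1: "cmod (q x) \<le> C2" using elim(2) by simp
      have p2: "- cmod (q x) \<le> C2" "0 \<le> C2" using p0 p1 by linarith+
      have f: "\<phi>' x \<le> C1" "- \<phi>' x \<le> C1" "c \<le> \<bar>c\<bar>" "- c \<le> \<bar>c\<bar>"
        using elim by auto
      note f = f p1 p2
      show ?case unfolding g1_def pos_part_def using f by (auto simp: max_def)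
    qed
    have bg2: "AE x in lborel. \<bar>g2 x\<bar> \<le> C1 / 2 + C2 + \<bar>c\<bar>"
      using C1 C2
    proof eventually_elim
      case (elim x)
      have p0: "0 \<le> cmod (q x)" by simp
      have p1: "cmod (q x) \<le> C2" using elim(2) by simp
      have p2: "- cmod (q x) \<le> C2" "0 \<le> C2" using p0 p1 by linarith+
      have f: "\<phi>' x \<le> C1" "- \<phi>' x \<le> C1" "c \<le> \<bar>c\<bar>" "- c \<le> \<bar>c\<bar>"
        using elim by auto
      note f = f p1 p2
      show ?case unfolding g2_def neg_part_def using f by (auto simp: max_def)
    qed
    have A1: "AE x in lborel. \<bar>g1 x\<bar> \<le> Linf_norm g1" by (rule Linf_norm_bound[OF mg1 bg1])
    have A2: "AE x in lborel. \<bar>g2 x\<bar> \<le> Linf_norm g2" by (rule Linf_norm_bound[OF mg2 bg2])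
    show "c - lam \<le> Linf_norm (pos_part (\<lambda>x. \<phi>' x / 2 - cmod (q x) + c))
             \<or> c + lam \<le> Linf_norm (neg_part (\<lambda>x. \<phi>' x / 2 + cmod (q x) - c))"
    proof (rule ccontr)
      assume "\<not> ?thesis"
      then have n1: "Linf_norm g1 < c - lam" and n2: "Linf_norm g2 < c + lam"
        unfolding g1_def g2_def by auto
      define \<delta> where "\<delta> = min (c - lam - Linf_norm g1) (c + lam - Linf_norm g2)"
      have \<delta>: "\<delta> > 0" unfolding \<delta>_def using n1 n2 by simp
      have d1: "\<delta> \<le> c - lam - Linf_norm g1" "\<delta> \<le> c + lam - Linf_norm g2" unfolding \<delta>_def by auto
      have "AE x in lborel. \<bar>\<phi>' x / 2 + lam\<bar> \<le> cmod (q x) - \<delta>"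
        using A1 A2
      proof eventually_elim
        case (elim x)
        have "\<phi>' x / 2 - cmod (q x) + c \<le> Linf_norm g1"
          using elim(1) unfolding g1_def pos_part_def by linarith
        moreover have "- (\<phi>' x / 2 + cmod (q x) - c) \<le> Linf_norm g2"
          using elim(2) unfolding g2_def neg_part_def by linarith
        ultimately show ?case using d1 unfolding abs_le_iff by (intro conjI) linarith+
      qed
      then show False using core[OF ev _ \<delta>] by blast
    qed
  }
  {
    fix c lam :: real
    assume c: "c > 0" and B: "AE x in lborel. cmod (q x) \<ge> c + \<bar>\<phi>' x\<bar> / 2" and lam: "lam \<in> {-c<..<c}"
    show "\<not> is_eigenvalue q (complex_of_real lam)"
    proof
      assume ev: "is_eigenvalue q (complex_of_real lam)"
      define \<delta> where "\<delta> = c - \<bar>lam\<bar>"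
      have \<delta>: "\<delta> > 0" using lam unfolding \<delta>_def by auto
      have "AE x in lborel. \<bar>\<phi>' x / 2 + lam\<bar> \<le> cmod (q x) - \<delta>"
        using B
      proof eventually_elim
        case (elim x)
        have "\<bar>\<phi>' x / 2 + lam\<bar> \<le> \<bar>\<phi>' x\<bar> / 2 + \<bar>lam\<bar>" by (simp add: abs_triangle_ineq[THEN order_trans])
        then show ?case using elim unfolding \<delta>_def by linarith
      qed
      then show False using core[OF ev _ \<delta>] by blast
    qed
  }
qed


end
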